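(* The set $S_Z$ is empty.
   Context: All graphs are finite and simple. A graph $G$ is a minimal prime graph complement if $G$ has at least $2$ vertices and: (1) the complement $\overline{G}$ is connected; (2) $G$ is triangle-free; (3) $G$ is $3$-colorable; (4) for any two distinct nonadjacent vertices $u,v$ of $G$, adding the edge $uv$ to $G$ yields a graph that either contains a triangle or is not $3$-colorable. Standing setup: $\Gamma$ is a minimal prime graph complement with a vertex $X$ of degree $2$, whose two neighbors are $A$ and $B$. Among the vertices of $\Gamma$ other than $X,A,B$: $S_A$ is the set of those adjacent to $A$ but not $B$; $S_B$ the set of those adjacent to $B$ but not $A$; $S_Y$ the set of those adjacent to both $A$ and $B$; $S_Z$ the set of those adjacent to neither $A$ nor $B$. *)

theory Defs
  imports Main
begin

definition simple_graph :: "'a set \<Rightarrow> ('a \<Rightarrow> 'a \<Rightarrow> bool) \<Rightarrow> bool" where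
  "simple_graph V E \<longleftrightarrow> finite V \<and> (\<forall>u v. E u v \<longrightarrow> u \<in> V \<and> v \<in> V)
     \<and> (\<forall>u v. E u v \<longrightarrow> E v u) \<and> (\<forall>u. \<not> E u u)"

definition compl_edge :: "'a set \<Rightarrow> ('a \<Rightarrow> 'a \<Rightarrow> bool) \<Rightarrow> 'a \<Rightarrow> 'a \<Rightarrow> bool" where
  "compl_edge V E u v \<longleftrightarrow> u \<in> V \<and> v \<in> V \<and> u \<noteq> v \<and> \<not> E u v"

definition connected_graph :: "'a set \<Rightarrow> ('a \<Rightarrow> 'a \<Rightarrow> bool) \<Rightarrow> bool" where
  "connected_graph V E \<longleftrightarrow> V \<noteq> {} \<and> (\<forall>u\<in>V. \<forall>v\<in>V. E\<^sup>*\<^sup>* u v)"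

definition triangle_free :: "'a set \<Rightarrow> ('a \<Rightarrow> 'a \<Rightarrow> bool) \<Rightarrow> bool" where
  "triangle_free V E \<longleftrightarrow> \<not> (\<exists>a\<in>V. \<exists>b\<in>V. \<exists>c\<in>V. E a b \<and> E b c \<and> E a c)"

definition three_colorable :: "'a set \<Rightarrow> ('a \<Rightarrow> 'a \<Rightarrow> bool) \<Rightarrow> bool" where
  "three_colorable V E \<longleftrightarrow> (\<exists>f :: 'a \<Rightarrow> nat. (\<forall>v\<in>V. f v < 3)
      \<and> (\<forall>u\<in>V. \<forall>v\<in>V. E u v \<longrightarrow> f u \<noteq> f v))"

definition add_edge :: "('a \<Rightarrow> 'a \<Rightarrow> bool) \<Rightarrow> 'a \<Rightarrow> 'a \<Rightarrow> 'a \<Rightarrow> 'a \<Rightarrow> bool" where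
  "add_edge E u v = (\<lambda>x y. E x y \<or> (x = u \<and> y = v) \<or> (x = v \<and> y = u))"

definition minimal_prime_graph_complement :: "'a set \<Rightarrow> ('a \<Rightarrow> 'a \<Rightarrow> bool) \<Rightarrow> bool" where
  "minimal_prime_graph_complement V E \<longleftrightarrow>
     simple_graph V E \<and> card V \<ge> 2
     \<and> connected_graph V (compl_edge V E)
     \<and> triangle_free V E
     \<and> three_colorable V E
     \<and> (\<forall>u\<in>V. \<forall>v\<in>V. u \<noteq> v \<and> \<not> E u v \<longrightarrow>
          \<not> triangle_free V (add_edge E u v) \<or> \<not> three_colorable V (add_edge E u v))"

definition degree :: "'a set \<Rightarrow> ('a \<Rightarrow> 'a \<Rightarrow> bool) \<Rightarrow> 'a \<Rightarrow> nat" where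
  "degree V E x = card {y\<in>V. E x y}"

end

theory Submission
  imports Defs
begin

theorem lemma10:
  fixes V :: "'a set" and E :: "'a \<Rightarrow> 'a \<Rightarrow> bool" and X A B :: 'a
  assumes "minimal_prime_graph_complement V E"
    and "X \<in> V" and "degree V E X = 2"
    and "E X A" and "E X B" and "A \<noteq> B"
  shows "{z \<in> V - {X, A, B}. \<not> E z A \<and> \<not> E z B} = {}"
proof (rule ccontr)
  note M = assms(1)[unfolded minimal_prime_graph_complement_def]
  have sg: "simple_graph V E" and tf: "triangle_free V E" and tc: "three_colorable V E"
    and maxl: "\<forall>u\<in>V. \<forall>v\<in>V. u \<noteq> v \<and> \<not> E u v \<longrightarrow>
          \<not> triangle_free V (add_edge E u v) \<or> \<not> three_colorable V (add_edge E u v)"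
    using M by auto
  have fin: "finite V" and inV: "\<And>u v. E u v \<Longrightarrow> u \<in> V \<and> v \<in> V"
    and sym: "\<And>u v. E u v \<Longrightarrow> E v u" and irr: "\<And>u. \<not> E u u"
    using sg unfolding simple_graph_def by auto
  have tri: "\<And>a b c. E a b \<Longrightarrow> E b c \<Longrightarrow> E a c \<Longrightarrow> False"
    using tf inV unfolding triangle_free_def by blast
  have XA: "E X A" and XB: "E X B" using assms by auto
  have AV: "A \<in> V" and BV: "B \<in> V" using inV XA XB by auto
  have XnA: "X \<noteq> A" and XnB: "X \<noteq> B" using irr XA XB by auto
  have nbr: "{y\<in>V. E X y} = {A, B}"
  proof -
    have sub: "{A, B} \<subseteq> {y\<in>V. E X y}" using AV BV XA XB by auto
    have "card {A, B} = card {y\<in>V. E X y}" using assms(3) assms(6) unfolding degree_def by simp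
    then show ?thesis using card_subset_eq[OF _ sub] fin by auto
  qed
  have NX: "\<And>y. E X y \<Longrightarrow> y = A \<or> y = B"
  proof -
    fix y assume "E X y"
    then have "y \<in> {y\<in>V. E X y}" using inV by auto
    then show "y = A \<or> y = B" using nbr by auto
  qed
  have L: "f y = f X" if c1: "\<forall>v\<in>V. f v < 3" and c2: "\<forall>u\<in>V. \<forall>v\<in>V. E u v \<longrightarrow> f u \<noteq> f v"
    and y: "y \<in> V" "y \<noteq> X" "y \<noteq> A" "y \<noteq> B" "\<not> E y A" "\<not> E y B" for f :: "'a \<Rightarrow> nat" and y
  proof (rule ccontr)
    assume ne: "f y \<noteq> f X"
    have nXy: "\<not> E X y" using NX y by auto
    have "triangle_free V (add_edge E X y)"
      unfolding triangle_free_def add_edge_def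
    proof
      assume "\<exists>a\<in>V. \<exists>b\<in>V. \<exists>c\<in>V. (E a b \<or> a = X \<and> b = y \<or> a = y \<and> b = X) \<and>
          (E b c \<or> b = X \<and> c = y \<or> b = y \<and> c = X) \<and> (E a c \<or> a = X \<and> c = y \<or> a = y \<and> c = X)"
      then obtain a b c where
        h: "(E a b \<or> a = X \<and> b = y \<or> a = y \<and> b = X)" "(E b c \<or> b = X \<and> c = y \<or> b = y \<and> c = X)"
           "(E a c \<or> a = X \<and> c = y \<or> a = y \<and> c = X)" by blast
      show False using h
      proof (elim disjE conjE)
        assume "E a b" "E b c" "E a c" then show False using tri by blast
      qed (use NX sym y irr nXy in \<open>force+\<close>)
    qed
    moreover have "three_colorable V (add_edge E X y)"
      unfolding three_colorable_def add_edge_def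
    proof (rule exI[of _ f], intro conjI ballI impI)
      fix v assume "v \<in> V" then show "f v < 3" using c1 by blast
    next
      fix u v assume uv: "u \<in> V" "v \<in> V" "E u v \<or> u = X \<and> v = y \<or> u = y \<and> v = X"
      then show "f u \<noteq> f v" using c2 ne by metis
    qed
    ultimately show False using maxl[rule_format, OF \<open>X \<in> V\<close> y(1)] y(2) nXy by blast
  qed
  assume "{z \<in> V - {X, A, B}. \<not> E z A \<and> \<not> E z B} \<noteq> {}"
  then obtain z where z: "z \<in> V" "z \<noteq> X" "z \<noteq> A" "z \<noteq> B" "\<not> E z A" "\<not> E z B" by auto
  obtain f :: "'a \<Rightarrow> nat" where f1: "\<forall>v\<in>V. f v < 3"
    and f2: "\<forall>u\<in>V. \<forall>v\<in>V. E u v \<longrightarrow> f u \<noteq> f v"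
    using tc unfolding three_colorable_def by blast
  have fAB: "f A \<noteq> f B"
  proof
    assume eq: "f A = f B"
    obtain d :: nat where d: "d < 3" "d \<noteq> f A" "d \<noteq> f z"
    proof -
      have "\<exists>d::nat. d < 3 \<and> d \<noteq> f A \<and> d \<noteq> f z" by presburger
      then show ?thesis using that by blast
    qed
    define f' where "f' = f(X := d)"
    have g1: "\<forall>v\<in>V. f' v < 3" using f1 d unfolding f'_def by auto
    have g2: "\<forall>u\<in>V. \<forall>v\<in>V. E u v \<longrightarrow> f' u \<noteq> f' v"
    proof (intro ballI impI)
      fix u v assume uv: "u \<in> V" "v \<in> V" "E u v"
      show "f' u \<noteq> f' v"
      proof (cases "u = X \<or> v = X")
        case True
        then show ?thesis using NX sym uv irr d eq XnA XnB unfolding f'_def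
          by (metis fun_upd_apply)
      next
        case False
        then show ?thesis using f2 uv unfolding f'_def by auto
      qed
    qed
    have "f' z = f' X" using L[OF g1 g2 z] .
    then show False using d z unfolding f'_def by auto
  qed
  have fXA: "f X \<noteq> f A" "f X \<noteq> f B" using f2 XA XB \<open>X \<in> V\<close> AV BV by auto
  have N2: "f w = f X" if "w \<in> V" "E w A" "E w B" for w
  proof -
    have "f w \<noteq> f A" "f w \<noteq> f B" using f2 that AV BV by auto
    moreover have "f w < 3" "f X < 3" "f A < 3" "f B < 3" using f1 that AV BV \<open>X \<in> V\<close> by auto
    ultimately show ?thesis using fXA fAB by arith
  qed
  define g :: "'a \<Rightarrow> nat" where "g v = (if v = A \<or> v = B then 2 else if E v A \<and> E v B then 0
       else if E v A then 1 else if E v B then 0 else 2)" for v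
  have g1: "\<forall>v\<in>V. g v < 3" unfolding g_def by auto
  have g2: "\<forall>u\<in>V. \<forall>v\<in>V. E u v \<longrightarrow> g u \<noteq> g v"
  proof (intro ballI impI)
    fix u v assume uv: "u \<in> V" "v \<in> V" "E u v"
    have ZZ: False if "\<not> E u A" "\<not> E u B" "u \<noteq> A" "u \<noteq> B" "\<not> E v A" "\<not> E v B" "v \<noteq> A" "v \<noteq> B"
    proof -
      have "u \<noteq> X" "v \<noteq> X" using that XA XB by auto
      then have "f u = f X" "f v = f X" using L[OF f1 f2] uv that by auto
      moreover have "f u \<noteq> f v" using f2 uv by blast
      ultimately show False by simp
    qed
    have NZ: False if "u' \<in> V" "v' \<in> V" "E u' v'" "E u' A" "E u' B" "\<not> E v' A" "\<not> E v' B" "v' \<noteq> A" "v' \<noteq> B" for u' v'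
    proof -
      have "v' \<noteq> X" using that XA by auto
      then have "f u' = f X" "f v' = f X" using L[OF f1 f2] N2 that by auto
      moreover have "f u' \<noteq> f v'" using f2 that by blast
      ultimately show False by simp
    qed
    have nAB: "\<not> E A B" using tri[of X A B] XA XB by blast
    have t1: "\<not> (E u A \<and> E v A)" using tri[of u v A] uv by blast
    have t2: "\<not> (E u B \<and> E v B)" using tri[of u v B] uv by blast
    have s1: "E v u" using sym uv by blast
    show "g u \<noteq> g v" unfolding g_def
      using ZZ NZ[of u v] NZ[of v u] uv s1 t1 t2 nAB irr[of u] irr[of v]
      by (cases "u = A"; cases "u = B"; cases "v = A"; cases "v = B"; auto)
    
  qed
  have "g z = g X" using L[OF g1 g2 z] .
  then show False using z XA XB XnA XnB unfolding g_def by auto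
qed

end
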